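(* Let $n\ge 3$. Every $\sigma\in\mathcal{S}_n^{1\prec n}(1324)$ that is not a primitive (i.e. $\sigma\notin\mathcal{S}_{n,1}^{1\prec n}(1324)$) admits a unique decomposition $\sigma=\sigma_1\odot\sigma_2$ where $\sigma_1\in\mathcal{S}_{m,1}^{1\prec m}(1324)$ is a primitive for some $m\ge2$ and $\sigma_2\in\mathcal{S}_\ell^{1\prec\ell}(1324)$ with $\ell=n-m+1$.
   Context: $\mathcal{S}_n(1324)$ denotes the set of permutations of $\{1,\dots,n\}$ (in one-line notation) avoiding the pattern $1324$. For $a,k\ge1$, $\mathcal{S}_{n,k}^{a\prec n}(1324)$ is the set of $\sigma\in\mathcal{S}_n(1324)$ with $\sigma^{-1}(n)-\sigma^{-1}(a)=k$ and $\sigma^{-1}(b)>\sigma^{-1}(n)$ for all $b\in\{1,\dots,a-1\}$, and $\mathcal{S}_n^{a\prec n}(1324)=\bigcup_{k\ge1}\mathcal{S}_{n,k}^{a\prec n}(1324)$. Elements of $\mathcal{S}_{m,1}^{1\prec m}(1324)$ are called primitives; such a permutation has the form $\sigma_1=\pi_1\,1\,m\,\tau_1$. Given a primitive $\sigma_1=\pi_1\,1\,m\,\tau_1$ of size $m$ and $\sigma_2\in\mathcal{S}_\ell(1324)$ of the form $\sigma_2=\pi_2\,1\,\theta_2\,\ell\,\tau_2$ (words possibly empty), the product is $\sigma_1\odot\sigma_2=\widehat{\pi}_2\,\pi_1\,1\,m\,\widehat{\theta}_2\,n\,\widehat{\tau}_2\,\tau_1$, where $n=\ell+m-1$ and hats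 denote adding $m-1$ to each entry. *)

theory Defs
  imports Main
begin

definition is_perm :: "nat \<Rightarrow> nat list \<Rightarrow> bool" where
  "is_perm n xs \<longleftrightarrow> distinct xs \<and> set xs = {1..n}"

definition contains_1324 :: "nat list \<Rightarrow> bool" where
  "contains_1324 xs \<longleftrightarrow> (\<exists>i j k l. i < j \<and> j < k \<and> k < l \<and> l < length xs \<and>
      xs!i < xs!k \<and> xs!k < xs!j \<and> xs!j < xs!l)"

definition Av1324 :: "nat \<Rightarrow> nat list set" where
  "Av1324 n = {xs. is_perm n xs \<and> \<not> contains_1324 xs}"

text \<open>Position (0-based) of value v in the list (meaningful when v occurs in xs).\<close>
definition pos :: "nat list \<Rightarrow> nat \<Rightarrow> nat" where
  "pos xs v = length (takeWhile (\<lambda>x. x \<noteq> v) xs)"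

text \<open>S_{n,k}^{a<n}(1324): positions are compared as integers, so pos n - pos a = k with k >= 1.\<close>
definition Sk :: "nat \<Rightarrow> nat \<Rightarrow> nat \<Rightarrow> nat list set" where
  "Sk a n k = {xs. xs \<in> Av1324 n \<and> a \<in> set xs \<and> n \<in> set xs \<and>
      int (pos xs n) - int (pos xs a) = int k \<and>
      (\<forall>b \<in> {1..<a}. pos xs b > pos xs n)}"

definition S :: "nat \<Rightarrow> nat \<Rightarrow> nat list set" where
  "S a n = (\<Union>k \<in> {1..}. Sk a n k)"

definition odot :: "nat list \<Rightarrow> nat list \<Rightarrow> nat list" where
  "odot s1 s2 = (let m = length s1; l = length s2; n = l + m - 1;
      hat = map (\<lambda>x. x + (m - 1));
      \<pi>1 = takeWhile (\<lambda>x. x \<noteq> 1) s1;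
      \<tau>1 = drop (length \<pi>1 + 2) s1;
      \<pi>2 = takeWhile (\<lambda>x. x \<noteq> 1) s2;
      r2 = drop (length \<pi>2 + 1) s2;
      \<theta>2 = takeWhile (\<lambda>x. x \<noteq> l) r2;
      \<tau>2 = drop (length \<theta>2 + 1) r2
    in hat \<pi>2 @ \<pi>1 @ [1, m] @ hat \<theta>2 @ [n] @ hat \<tau>2 @ \<tau>1)"

end

theory Submission
  imports Defs
begin


lemma filter_embed:
  "\<exists>g. (\<forall>i<length (filter P xs). g i < length xs \<and> filter P xs ! i = xs ! g i) \<and>
       (\<forall>i j. i < j \<longrightarrow> j < length (filter P xs) \<longrightarrow> g i < g j)"
proof (induction xs)
  case Nil then show ?case by simp
next
  case (Cons x xs)
  then obtain g where g1: "\<forall>i<length (filter P xs). g i < length xs \<and> filter P xs ! i = xs ! g i"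
    and g2: "\<forall>i j. i < j \<longrightarrow> j < length (filter P xs) \<longrightarrow> g i < g j" by blast
  show ?case
  proof (cases "P x")
    case True
    let ?g = "\<lambda>i. case i of 0 \<Rightarrow> 0 | Suc k \<Rightarrow> Suc (g k)"
    have "\<forall>i<length (filter P (x#xs)). ?g i < length (x#xs) \<and> filter P (x#xs) ! i = (x#xs) ! ?g i"
    proof (intro allI impI)
      fix i assume i: "i < length (filter P (x#xs))"
      show "?g i < length (x#xs) \<and> filter P (x#xs) ! i = (x#xs) ! ?g i"
      proof (cases i)
        case 0 then show ?thesis using True by simp
      next
        case (Suc k) then show ?thesis using True i g1 by simp
      qed
    qed
    moreover have "\<forall>i j. i < j \<longrightarrow> j < length (filter P (x#xs)) \<longrightarrow> ?g i < ?g j"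
    proof (intro allI impI)
      fix i j assume ij: "i < j" "j < length (filter P (x#xs))"
      then obtain j' where j': "j = Suc j'" by (cases j) auto
      show "?g i < ?g j"
      proof (cases i)
        case 0 then show ?thesis using j' by simp
      next
        case (Suc k) then show ?thesis using True ij j' g2 by simp
      qed
    qed
    ultimately show ?thesis by (intro exI[of _ ?g] conjI)
  next
    case False
    let ?g = "\<lambda>i. Suc (g i)"
    have "\<forall>i<length (filter P (x#xs)). ?g i < length (x#xs) \<and> filter P (x#xs) ! i = (x#xs) ! ?g i"
      using g1 False by auto
    moreover have "\<forall>i j. i < j \<longrightarrow> j < length (filter P (x#xs)) \<longrightarrow> ?g i < ?g j"
      using g2 False by auto
    ultimately show ?thesis by (intro exI[of _ ?g] conjI)
  qed
qed

lemma contains_filter: "contains_1324 (filter P xs) \<Longrightarrow> contains_1324 xs"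
proof -
  assume "contains_1324 (filter P xs)"
  then obtain i j k l where h: "i < j" "j < k" "k < l" "l < length (filter P xs)"
    "filter P xs!i < filter P xs!k" "filter P xs!k < filter P xs!j" "filter P xs!j < filter P xs!l"
    unfolding contains_1324_def by blast
  obtain g where g1: "\<forall>i<length (filter P xs). g i < length xs \<and> filter P xs ! i = xs ! g i"
    and g2: "\<forall>i j. i < j \<longrightarrow> j < length (filter P xs) \<longrightarrow> g i < g j" using filter_embed by blast
  have "g i < g j" "g j < g k" "g k < g l" "g l < length xs" using g1 g2 h by auto
  moreover have "xs!g i < xs!g k" "xs!g k < xs!g j" "xs!g j < xs!g l" using g1 h by auto
  ultimately show ?thesis unfolding contains_1324_def
    by (intro exI[of _ "g i"] exI[of _ "g j"] exI[of _ "g k"] exI[of _ "g l"]) simp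
qed

lemma contains_map:
  assumes mono: "\<And>x y. x \<in> set xs \<Longrightarrow> y \<in> set xs \<Longrightarrow> x < y \<Longrightarrow> f x < f y"
    and c: "contains_1324 (map f xs)"
  shows "contains_1324 xs"
proof -
  have iff: "f x < f y \<longleftrightarrow> x < y" if "x \<in> set xs" "y \<in> set xs" for x y
    using mono[OF that] mono[OF that(2,1)] by (metis less_asym linorder_neqE_nat)
  from c obtain i j k l where h: "i < j" "j < k" "k < l" "l < length xs"
    "f (xs!i) < f (xs!k)" "f (xs!k) < f (xs!j)" "f (xs!j) < f (xs!l)"
    unfolding contains_1324_def by auto
  have "xs!i < xs!k" "xs!k < xs!j" "xs!j < xs!l" using h iff by (auto simp: nth_mem)
  with h show ?thesis unfolding contains_1324_def
    by (intro exI[of _ i] exI[of _ j] exI[of _ k] exI[of _ l]) simp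
qed

lemma contains_split:
  assumes "xs = u @ a # v @ b # w @ c # y @ d # z" "a < c" "c < b" "b < d"
  shows "contains_1324 xs"
  unfolding contains_1324_def
  apply (rule exI[of _ "length u"])
  apply (rule exI[of _ "length u + 1 + length v"])
  apply (rule exI[of _ "length u + 1 + length v + 1 + length w"])
  apply (rule exI[of _ "length u + 1 + length v + 1 + length w + 1 + length y"])
  using assms by (simp add: nth_append)

lemma pos_append: "v \<notin> set u \<Longrightarrow> pos (u @ w) v = length u + pos w v"
  unfolding pos_def by (induction u) auto

lemma pos_Cons_eq: "pos (v # w) v = 0"
  unfolding pos_def by simp

lemma pos_less: "v \<in> set xs \<Longrightarrow> pos xs v < length xs"
  unfolding pos_def by (induction xs) auto

lemma nth_pos: "v \<in> set xs \<Longrightarrow> xs ! pos xs v = v"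
  unfolding pos_def by (induction xs) auto

lemma tw_split: "l \<in> set xs \<Longrightarrow>
   takeWhile (\<lambda>x. x \<noteq> l) xs @ l # drop (length (takeWhile (\<lambda>x. x \<noteq> l) xs) + 1) xs = xs"
  by (induction xs) auto

lemma dw_bound:
  assumes no: "\<And>u x v y w. xs = u @ x # v @ y # w \<Longrightarrow> x < m \<Longrightarrow> y > m \<Longrightarrow> False"
    and nm: "(m::nat) \<notin> set xs" and z: "z \<in> set (dropWhile (\<lambda>x. x > m) xs)"
  shows "z < m"
proof (rule ccontr)
  assume "\<not> z < m"
  have "z \<in> set xs" using z set_dropWhileD by metis
  with nm have "z \<noteq> m" by auto
  with \<open>\<not> z < m\<close> have zm: "z > m" by simp
  obtain h rest where hr: "dropWhile (\<lambda>x. x > m) xs = h # rest" using z by (cases "dropWhile (\<lambda>x. x > m) xs") auto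
  have "\<not> h > m" using hr by (metis dropWhile_eq_Cons_conv)
  moreover have "h \<noteq> m" using nm hr by (metis list.set_intros(1) set_dropWhileD)
  ultimately have hm: "h < m" by simp
  have xs: "xs = takeWhile (\<lambda>x. x > m) xs @ h # rest" using hr takeWhile_dropWhile_id by metis
  have "z \<noteq> h" using zm hm by simp
  then have "z \<in> set rest" using z hr by simp
  then obtain r1 r2 where "rest = r1 @ z # r2" by (meson split_list)
  with xs have "xs = takeWhile (\<lambda>x. x > m) xs @ h # r1 @ z # r2" by simp
  from no[OF this hm zm] show False .
qed


lemma tw_notin: "v \<notin> set u \<Longrightarrow> takeWhile (\<lambda>x. x \<noteq> v) (u @ v # w) = u"
  by (induction u) auto

lemma odot_eval:
  assumes "length s1 = m" "length s2 = l" "s1 = \<pi>1 @ 1 # m # \<tau>1" "1 \<notin> set \<pi>1"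
    "s2 = \<pi>2 @ 1 # \<theta>2 @ l # \<tau>2" "1 \<notin> set \<pi>2" "l \<notin> set \<theta>2"
  shows "odot s1 s2 = map (\<lambda>x. x + (m - 1)) \<pi>2 @ \<pi>1 @ [1, m] @ map (\<lambda>x. x + (m - 1)) \<theta>2
     @ [l + m - 1] @ map (\<lambda>x. x + (m - 1)) \<tau>2 @ \<tau>1"
proof -
  have a: "takeWhile (\<lambda>x. x \<noteq> 1) s1 = \<pi>1" unfolding assms(3) by (rule tw_notin[OF assms(4)])
  have b: "takeWhile (\<lambda>x. x \<noteq> 1) s2 = \<pi>2" unfolding assms(5) by (rule tw_notin[OF assms(6)])
  have c: "takeWhile (\<lambda>x. x \<noteq> l) (\<theta>2 @ l # \<tau>2) = \<theta>2" by (rule tw_notin[OF assms(7)])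
  show ?thesis unfolding odot_def Let_def assms(1) assms(2) a b
    using assms(3,5) c by simp
qed


lemma pos_append_in: "v \<in> set u \<Longrightarrow> pos (u @ w) v = pos u v"
  unfolding pos_def by (induction u) auto

lemma perm_length: "is_perm n xs \<Longrightarrow> length xs = n"
proof -
  assume "is_perm n xs"
  then have "distinct xs" "set xs = {1..n}" unfolding is_perm_def by auto
  then have "length xs = card (set xs)" using distinct_card by metis
  also have "\<dots> = n" using \<open>set xs = {1..n}\<close> by simp
  finally show ?thesis .
qed

lemma fA: "\<forall>x\<in>set xs. (2::nat) \<le> x \<Longrightarrow> filter (\<lambda>x. x \<le> m) (map (\<lambda>x. x + (m - 1)) xs) = []"
  by (induction xs) auto
lemma fB: "\<forall>x\<in>set xs. (2::nat) \<le> x \<Longrightarrow> filter (\<lambda>x. m \<le> x) (map (\<lambda>x. x + (m - 1)) xs) = map (\<lambda>x. x + (m - 1)) xs"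
  by (induction xs) auto
lemma fC: "\<forall>x\<in>set xs. x < (m::nat) \<Longrightarrow> filter (\<lambda>x. x \<le> m) xs = xs"
  by (induction xs) auto
lemma fD: "\<forall>x\<in>set xs. x < (m::nat) \<Longrightarrow> filter (\<lambda>x. m \<le> x) xs = []"
  by (induction xs) auto

lemma uniq:
  assumes m2: "m \<ge> 2" and s1: "s1 \<in> Sk 1 m 1" and s2: "s2 \<in> S 1 l" and sig: "\<sigma> = odot s1 s2"
  shows "m = \<sigma> ! (pos \<sigma> 1 + 1) \<and> s1 = filter (\<lambda>x. x \<le> m) \<sigma> \<and>
         s2 = map (\<lambda>x. x - (m - 1)) (filter (\<lambda>x. x \<ge> m) \<sigma>)"
proof -
  from s1 have p1: "is_perm m s1" and d1: "int (pos s1 m) - int (pos s1 1) = 1"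
    and i1: "1 \<in> set s1" and im: "m \<in> set s1"
    unfolding Sk_def Av1324_def by auto
  from s2 obtain k where "k \<ge> 1" "s2 \<in> Sk 1 l k" unfolding S_def by auto
  then have p2: "is_perm l s2" and d2: "pos s2 1 < pos s2 l"
    and j1: "1 \<in> set s2" and jl: "l \<in> set s2"
    unfolding Sk_def Av1324_def by auto
  have len1: "length s1 = m" using p1 perm_length by blast
  have len2: "length s2 = l" using p2 perm_length by blast
  define \<pi>1 where "\<pi>1 = takeWhile (\<lambda>x. x \<noteq> 1) s1"
  define \<tau>1 where "\<tau>1 = drop (length \<pi>1 + 2) s1"
  have e1: "s1 = \<pi>1 @ 1 # drop (length \<pi>1 + 1) s1" using tw_split[OF i1] unfolding \<pi>1_def by simp
  have pp1: "pos s1 1 = length \<pi>1" unfolding pos_def \<pi>1_def by simp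
  have pm1: "pos s1 m = length \<pi>1 + 1" using d1 pp1 by simp
  have "s1 ! (length \<pi>1 + 1) = m" using nth_pos[OF im] pm1 by simp
  moreover have "length \<pi>1 + 1 < length s1" using pos_less[OF im] pm1 by simp
  ultimately have "drop (length \<pi>1 + 1) s1 = m # \<tau>1" unfolding \<tau>1_def
    using Cons_nth_drop_Suc[of "length \<pi>1 + 1" s1] by simp
  with e1 have s1eq: "s1 = \<pi>1 @ 1 # m # \<tau>1" by simp
  define \<pi>2 where "\<pi>2 = takeWhile (\<lambda>x. x \<noteq> 1) s2"
  define r2 where "r2 = drop (length \<pi>2 + 1) s2"
  define \<theta>2 where "\<theta>2 = takeWhile (\<lambda>x. x \<noteq> l) r2"
  define \<tau>2 where "\<tau>2 = drop (length \<theta>2 + 1) r2"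
  have e2: "s2 = \<pi>2 @ 1 # r2" using tw_split[OF j1] unfolding \<pi>2_def r2_def by simp
  have pp2: "pos s2 1 = length \<pi>2" unfolding pos_def \<pi>2_def by simp
  have l1: "l \<noteq> 1" using d2 by auto
  have "l \<notin> set \<pi>2"
  proof
    assume "l \<in> set \<pi>2"
    then have "pos s2 l = pos \<pi>2 l" by (subst e2, rule pos_append_in)
    also have "\<dots> < length \<pi>2" using pos_less \<open>l \<in> set \<pi>2\<close> by blast
    finally show False using d2 pp2 by simp
  qed
  moreover have "l \<in> set (\<pi>2 @ 1 # r2)" using jl e2 by simp
  ultimately have "l \<in> set r2" using l1 by simp
  from tw_split[OF this] have "r2 = \<theta>2 @ l # \<tau>2" unfolding \<theta>2_def \<tau>2_def by simp
  with e2 have s2eq: "s2 = \<pi>2 @ 1 # \<theta>2 @ l # \<tau>2" by simp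
  have ds1: "distinct s1" "set s1 = {1..m}" using p1 unfolding is_perm_def by auto
  have ds2: "distinct s2" "set s2 = {1..l}" using p2 unfolding is_perm_def by auto
  have v1: "\<forall>x\<in>set \<pi>1 \<union> set \<tau>1. 2 \<le> x \<and> x < m"
  proof
    fix x assume x: "x \<in> set \<pi>1 \<union> set \<tau>1"
    then have "x \<in> {1..m}" "x \<noteq> 1" "x \<noteq> m" using ds1 s1eq by auto
    then show "2 \<le> x \<and> x < m" by auto
  qed
  have v2: "\<forall>x\<in>set \<pi>2 \<union> set \<theta>2 \<union> set \<tau>2. 2 \<le> x \<and> x < l"
  proof
    fix x assume x: "x \<in> set \<pi>2 \<union> set \<theta>2 \<union> set \<tau>2"
    then have "x \<in> {1..l}" "x \<noteq> 1" "x \<noteq> l" using ds2 s2eq by auto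
    then show "2 \<le> x \<and> x < l" by auto
  qed
  have n1: "1 \<notin> set \<pi>1" using ds1 s1eq by auto
  have n2: "1 \<notin> set \<pi>2" "l \<notin> set \<theta>2" using ds2 s2eq by auto
  define h where "h = (\<lambda>x::nat. x + (m - 1))"
  have sg: "\<sigma> = map h \<pi>2 @ \<pi>1 @ [1, m] @ map h \<theta>2 @ [l + m - 1] @ map h \<tau>2 @ \<tau>1"
    unfolding sig h_def by (rule odot_eval[OF len1 len2 s1eq n1 s2eq n2])
  have "\<forall>x\<in>set \<pi>2. h x \<noteq> 1"
  proof
    fix x assume "x \<in> set \<pi>2"
    then have "2 \<le> x" using v2 by blast
    then show "h x \<noteq> 1" unfolding h_def by simp
  qed
  then have "1 \<notin> set (map h \<pi>2 @ \<pi>1)" using n1 by auto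
  then have "pos \<sigma> 1 = length (map h \<pi>2 @ \<pi>1)" unfolding sg
    by (metis append.assoc append_Cons pos_Cons_eq pos_append add_0_right)
  then have c1: "m = \<sigma> ! (pos \<sigma> 1 + 1)" unfolding sg by (simp add: nth_append)
  have l2: "l \<ge> 2" using l1 jl ds2 by auto
  have w1: "\<forall>x\<in>set \<pi>1. x < m" "\<forall>x\<in>set \<tau>1. x < m" using v1 by auto
  have w2: "\<forall>x\<in>set \<pi>2. 2 \<le> x" "\<forall>x\<in>set \<theta>2. 2 \<le> x" "\<forall>x\<in>set \<tau>2. 2 \<le> x" using v2 by auto
  have "filter (\<lambda>x. x \<le> m) \<sigma> = \<pi>1 @ [1, m] @ \<tau>1"
    unfolding sg h_def filter_append fA[OF w2(1)] fA[OF w2(2)] fA[OF w2(3)] fC[OF w1(1)] fC[OF w1(2)]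
    using m2 l2 by simp
  then have c2: "s1 = filter (\<lambda>x. x \<le> m) \<sigma>" using s1eq by simp
  have "filter (\<lambda>x. x \<ge> m) \<sigma> = map h \<pi>2 @ m # map h \<theta>2 @ [l + m - 1] @ map h \<tau>2"
    unfolding sg h_def filter_append fB[OF w2(1)] fB[OF w2(2)] fB[OF w2(3)] fD[OF w1(1)] fD[OF w1(2)]
    using m2 l2 by simp
  moreover have "map (\<lambda>x. x - (m - 1)) (map h xs) = xs" for xs
    unfolding h_def by (induction xs) auto
  ultimately have c3: "s2 = map (\<lambda>x. x - (m - 1)) (filter (\<lambda>x. x \<ge> m) \<sigma>)"
    using s2eq m2 l2 by simp
  show ?thesis using c1 c2 c3 by blast
qed


lemma fE: "\<forall>x\<in>set xs. x > (m::nat) \<Longrightarrow> filter (\<lambda>x. x \<le> m) xs = []"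
  by (induction xs) auto
lemma fF: "\<forall>x\<in>set xs. x > (m::nat) \<Longrightarrow> filter (\<lambda>x. m \<le> x) xs = xs"
  by (induction xs) auto
lemma hf: "\<forall>x\<in>set xs. (m::nat) \<le> x \<Longrightarrow> map (\<lambda>x. x + (m - 1)) (map (\<lambda>x. x - (m - 1)) xs) = xs"
  by (induction xs) auto

lemma exist:
  assumes n3: "n \<ge> 3" and sS: "\<sigma> \<in> S 1 n" and nS: "\<sigma> \<notin> Sk 1 n 1"
  shows "\<exists>s1 s2. \<exists>m l. m \<ge> 2 \<and> s1 \<in> Sk 1 m 1 \<and> l = n - m + 1 \<and> s2 \<in> S 1 l \<and> \<sigma> = odot s1 s2"
proof -
  from sS obtain k where k1: "k \<ge> 1" and sk: "\<sigma> \<in> Sk 1 n k" unfolding S_def by auto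
  from sk have av: "\<sigma> \<in> Av1324 n" and i1: "1 \<in> set \<sigma>" and iN: "n \<in> set \<sigma>"
    and dk: "int (pos \<sigma> n) - int (pos \<sigma> 1) = int k" unfolding Sk_def by auto
  have "k \<noteq> 1" using sk nS by auto
  with k1 dk have gap: "pos \<sigma> n \<ge> pos \<sigma> 1 + 2" by simp
  from av have ds: "distinct \<sigma>" and st: "set \<sigma> = {1..n}" and nc: "\<not> contains_1324 \<sigma>"
    unfolding Av1324_def is_perm_def by auto
  define pre where "pre = takeWhile (\<lambda>x. x \<noteq> 1) \<sigma>"
  define rest where "rest = drop (length pre + 1) \<sigma>"
  have e1: "\<sigma> = pre @ 1 # rest" using tw_split[OF i1] unfolding pre_def rest_def by simp
  have p1: "pos \<sigma> 1 = length pre" unfolding pos_def pre_def by simp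
  have nnpre: "n \<notin> set pre"
  proof
    assume h: "n \<in> set pre"
    then have "pos \<sigma> n = pos pre n" by (subst e1, rule pos_append_in)
    also have "\<dots> < length pre" using pos_less h by blast
    finally show False using gap p1 by simp
  qed
  have n1: "n \<noteq> 1" using n3 by simp
  have "n \<notin> set (pre @ [1])" using nnpre n1 by simp
  then have "pos ((pre @ [1]) @ rest) n = length (pre @ [1]) + pos rest n" by (rule pos_append)
  then have pn: "pos \<sigma> n = length pre + 1 + pos rest n" using e1 by simp
  have nrest: "n \<in> set rest" using iN e1 nnpre n1 by simp
  then obtain m post where rp: "rest = m # post" by (cases rest) auto
  have mn': "m \<noteq> n"
  proof
    assume "m = n"
    then have "pos rest n = 0" using rp pos_Cons_eq by simp
    then show False using pn gap p1 by simp
  qed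
  have npost: "n \<in> set post" using nrest mn' rp by simp
  have sg: "\<sigma> = pre @ 1 # m # post" using e1 rp by simp
  have d2: "distinct (pre @ 1 # m # post)" using ds sg by simp
  have inr: "\<forall>x\<in>set \<sigma>. 1 \<le> x \<and> x \<le> n" using st by auto
  have "m \<in> set \<sigma>" using sg by simp
  then have "1 \<le> m" "m \<le> n" using inr by auto
  moreover have "m \<noteq> 1" using d2 by auto
  ultimately have m2: "2 \<le> m" and mn: "m < n" using mn' by auto
  have post_no: "False" if h: "post = u @ x # v @ y # w" "x < m" "m < y" for u x v y w
  proof -
    have xp: "x \<in> set post" using h(1) by simp
    then have "x \<noteq> 1" using d2 by auto
    moreover have "x \<ge> 1" using inr sg xp by auto
    ultimately have x1: "1 < x" by simp
    have "\<sigma> = pre @ 1 # [] @ m # u @ x # v @ y # w" using sg h(1) by simp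
    from contains_split[OF this x1 h(2) h(3)] nc show False by simp
  qed
  obtain q1 q2 where q: "post = q1 @ n # q2" using npost by (meson split_list)
  have pre_no: "False" if h: "pre = u @ x # v @ y # w" "x < m" "m < y" for u x v y w
  proof -
    have yp: "y \<in> set pre" using h(1) by simp
    then have "y \<noteq> n" using nnpre by auto
    moreover have "y \<le> n" using inr sg yp by auto
    ultimately have yn: "y < n" by simp
    have "\<sigma> = u @ x # v @ y # (w @ [1]) @ m # q1 @ n # q2" using sg h(1) q by simp
    from contains_split[OF this h(2) h(3) yn] nc show False by simp
  qed
  have mpre: "m \<notin> set pre" and mpost: "m \<notin> set post" and opre: "1 \<notin> set pre" using d2 by auto
  define A where "A = takeWhile (\<lambda>x. x > m) pre"
  define B where "B = dropWhile (\<lambda>x. x > m) pre"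
  define C where "C = takeWhile (\<lambda>x. x > m) post"
  define D where "D = dropWhile (\<lambda>x. x > m) post"
  have pre_eq: "pre = A @ B" unfolding A_def B_def by simp
  have post_eq: "post = C @ D" unfolding C_def D_def by simp
  have Bm: "\<forall>z\<in>set B. z < m"
  proof
    fix z assume z: "z \<in> set B"
    show "z < m"
    proof (rule dw_bound[of pre m z])
      fix u x v y w assume "pre = u @ x # v @ y # w" "x < m" "y > m" then show False by (rule pre_no)
    next
      show "m \<notin> set pre" by (rule mpre)
    next
      show "z \<in> set (dropWhile (\<lambda>x. x > m) pre)" using z unfolding B_def .
    qed
  qed
  have Dm: "\<forall>z\<in>set D. z < m"
  proof
    fix z assume z: "z \<in> set D"
    show "z < m"
    proof (rule dw_bound[of post m z])
      fix u x v y w assume "post = u @ x # v @ y # w" "x < m" "y > m" then show False by (rule post_no)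
    next
      show "m \<notin> set post" by (rule mpost)
    next
      show "z \<in> set (dropWhile (\<lambda>x. x > m) post)" using z unfolding D_def .
    qed
  qed
  have Am: "\<forall>z\<in>set A. z > m" unfolding A_def by (auto dest: set_takeWhileD)
  have Cm: "\<forall>z\<in>set C. z > m" unfolding C_def by (auto dest: set_takeWhileD)
  have nC: "n \<in> set C" using npost post_eq Dm mn by auto
  have sg2: "\<sigma> = A @ B @ 1 # m # C @ D" using sg pre_eq post_eq by simp
  define f where "f = (\<lambda>x::nat. x - (m - 1))"
  define s1 where "s1 = B @ 1 # m # D"
  define s2 where "s2 = map f A @ 1 # map f C"
  define l where "l = n - m + 1"
  have fil1: "filter (\<lambda>x. x \<le> m) \<sigma> = s1"
    unfolding sg2 s1_def filter_append fE[OF Am] fE[OF Cm] fC[OF Bm] fC[OF Dm] using m2 by (simp add: fE[OF Cm] fC[OF Dm])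
  have fil2: "filter (\<lambda>x. m \<le> x) \<sigma> = A @ m # C"
    unfolding sg2 filter_append fF[OF Am] fF[OF Cm] fD[OF Bm] fD[OF Dm] using m2 by (simp add: fF[OF Cm] fD[OF Dm])
  have s2f: "s2 = map f (filter (\<lambda>x. m \<le> x) \<sigma>)" unfolding fil2 s2_def using m2 by (simp add: f_def)
  have BA: "set B \<subseteq> set pre" "set A \<subseteq> set pre" using pre_eq by auto
  have o1: "1 \<notin> set B" using BA opre by auto
  have ps1: "is_perm m s1" unfolding is_perm_def
  proof
    show "distinct s1" unfolding fil1[symmetric] using ds by simp
    show "set s1 = {1..m}" unfolding fil1[symmetric] using st mn by auto
  qed
  have cs1: "\<not> contains_1324 s1" using nc contains_filter fil1 by metis
  have pos11: "pos s1 1 = length B" unfolding s1_def using o1 by (simp add: pos_append pos_Cons_eq)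
  have "m \<notin> set (B @ [1])" using Bm m2 by auto
  then have "pos ((B @ [1]) @ m # D) m = length (B @ [1]) + pos (m # D) m" by (rule pos_append)
  then have pos1m: "pos s1 m = length B + 1" unfolding s1_def by (simp add: pos_Cons_eq)
  have s1S: "s1 \<in> Sk 1 m 1" unfolding Sk_def Av1324_def
    using ps1 cs1 pos11 pos1m by (simp add: s1_def)
  have injf: "inj_on f (set (filter (\<lambda>x. m \<le> x) \<sigma>))"
    by (rule inj_onI) (auto simp: f_def)
  have "set s2 = f ` {x \<in> {1..n}. m \<le> x}" unfolding s2f using st by simp
  also have "\<dots> = {1..l}"
  proof
    show "f ` {x \<in> {1..n}. m \<le> x} \<subseteq> {1..l}" unfolding f_def l_def using m2 by auto
    show "{1..l} \<subseteq> f ` {x \<in> {1..n}. m \<le> x}"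
    proof
      fix y assume y: "y \<in> {1..l}"
      have "y = f (y + (m - 1))" unfolding f_def by simp
      moreover have "y + (m - 1) \<in> {x \<in> {1..n}. m \<le> x}" using y m2 mn unfolding l_def by auto
      ultimately show "y \<in> f ` {x \<in> {1..n}. m \<le> x}" by (rule image_eqI)
    qed
  qed
  finally have sets2: "set s2 = {1..l}" .
  have ps2: "is_perm l s2" unfolding is_perm_def
    using sets2 ds injf unfolding s2f by (simp add: distinct_map)
  have "\<not> contains_1324 (filter (\<lambda>x. m \<le> x) \<sigma>)"
    using nc contains_filter by blast
  then have cs2: "\<not> contains_1324 s2" unfolding s2f
    using contains_map[of "filter (\<lambda>x. m \<le> x) \<sigma>" f] unfolding f_def by force
  have fA1: "1 \<notin> set (map f A)" using Am m2 unfolding f_def by auto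
  have pos21: "pos s2 1 = length A" unfolding s2_def using fA1 by (simp add: pos_append pos_Cons_eq)
  have fn: "f n = l" unfolding f_def l_def using mn m2 by simp
  have l2: "l \<ge> 2" unfolding l_def using mn by simp
  have lC: "l \<in> set (map f C)" using nC fn by force
  have lA: "l \<notin> set (map f A)"
  proof
    assume "l \<in> set (map f A)"
    then obtain x where x: "x \<in> set A" "f x = l" by auto
    then have "x > m" using Am by auto
    with x(2) have "x = n" unfolding f_def l_def using mn m2 by simp
    with x(1) BA nnpre show False by auto
  qed
  have "l \<notin> set (map f A @ [1])" using lA l2 by simp
  then have "pos ((map f A @ [1]) @ map f C) l = length (map f A @ [1]) + pos (map f C) l"
    by (rule pos_append)
  then have pos2l: "pos s2 l = length A + 1 + pos (map f C) l" unfolding s2_def by simp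
  have "s2 \<in> Sk 1 l (1 + pos (map f C) l)" unfolding Sk_def Av1324_def
    using ps2 cs2 pos21 pos2l lC by (simp add: s2_def)
  then have s2S: "s2 \<in> S 1 l" unfolding S_def by force
  have len1: "length s1 = m" using ps1 perm_length by blast
  have len2: "length s2 = l" using ps2 perm_length by blast
  define \<theta>2 where "\<theta>2 = takeWhile (\<lambda>x. x \<noteq> l) (map f C)"
  define \<tau>2 where "\<tau>2 = drop (length \<theta>2 + 1) (map f C)"
  have Ceq: "map f C = \<theta>2 @ l # \<tau>2" using tw_split[OF lC] unfolding \<theta>2_def \<tau>2_def by simp
  have lth: "l \<notin> set \<theta>2" unfolding \<theta>2_def by (auto dest: set_takeWhileD)
  have s2eq: "s2 = map f A @ 1 # \<theta>2 @ l # \<tau>2" unfolding s2_def Ceq by simp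
  have od: "odot s1 s2 = map (\<lambda>x. x + (m - 1)) (map f A) @ B @ [1, m] @ map (\<lambda>x. x + (m - 1)) \<theta>2
     @ [l + m - 1] @ map (\<lambda>x. x + (m - 1)) \<tau>2 @ D"
    by (rule odot_eval[OF len1 len2 s1_def o1 s2eq fA1 lth])
  have hl: "l + m - 1 = l + (m - 1)" using m2 by simp
  have "map (\<lambda>x. x + (m - 1)) \<theta>2 @ [l + m - 1] @ map (\<lambda>x. x + (m - 1)) \<tau>2
      = map (\<lambda>x. x + (m - 1)) (map f C)" unfolding Ceq hl by simp
  also have "\<dots> = C" unfolding f_def using hf Cm by (meson less_imp_le)
  finally have hC: "map (\<lambda>x. x + (m - 1)) \<theta>2 @ [l + m - 1] @ map (\<lambda>x. x + (m - 1)) \<tau>2 = C" .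
  have hA: "map (\<lambda>x. x + (m - 1)) (map f A) = A" unfolding f_def using hf Am by (meson less_imp_le)
  have "odot s1 s2 = \<sigma>" unfolding od sg2 using hC hA by simp
  then show ?thesis using m2 s1S s2S l_def by blast
qed

theorem mainTheorem3:
  fixes n :: nat and \<sigma> :: "nat list"
  assumes "n \<ge> 3"
    and "\<sigma> \<in> S 1 n"
    and "\<sigma> \<notin> Sk 1 n 1"
  shows "\<exists>!(\<sigma>1, \<sigma>2). \<exists>m l. m \<ge> 2 \<and> \<sigma>1 \<in> Sk 1 m 1 \<and> l = n - m + 1 \<and>
           \<sigma>2 \<in> S 1 l \<and> \<sigma> = odot \<sigma>1 \<sigma>2"
proof (rule ex_ex1I)
  from exist[OF assms] obtain s1 s2 m l where
    "m \<ge> 2 \<and> s1 \<in> Sk 1 m 1 \<and> l = n - m + 1 \<and> s2 \<in> S 1 l \<and> \<sigma> = odot s1 s2" by blast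
  then show "\<exists>p. case p of (\<sigma>1, \<sigma>2) \<Rightarrow> \<exists>m l. m \<ge> 2 \<and> \<sigma>1 \<in> Sk 1 m 1 \<and> l = n - m + 1 \<and>
           \<sigma>2 \<in> S 1 l \<and> \<sigma> = odot \<sigma>1 \<sigma>2"
    by (intro exI[of _ "(s1, s2)"]) auto
next
  fix p q
  assume hp: "case p of (\<sigma>1, \<sigma>2) \<Rightarrow> \<exists>m l. m \<ge> 2 \<and> \<sigma>1 \<in> Sk 1 m 1 \<and> l = n - m + 1 \<and>
           \<sigma>2 \<in> S 1 l \<and> \<sigma> = odot \<sigma>1 \<sigma>2"
    and hq: "case q of (\<sigma>1, \<sigma>2) \<Rightarrow> \<exists>m l. m \<ge> 2 \<and> \<sigma>1 \<in> Sk 1 m 1 \<and> l = n - m + 1 \<and>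
           \<sigma>2 \<in> S 1 l \<and> \<sigma> = odot \<sigma>1 \<sigma>2"
  obtain a b where pab: "p = (a, b)" by (cases p)
  obtain c d where qcd: "q = (c, d)" by (cases q)
  from hp pab obtain m l where h1: "m \<ge> 2" "a \<in> Sk 1 m 1" "b \<in> S 1 l" "\<sigma> = odot a b" by auto
  from hq qcd obtain m' l' where h2: "m' \<ge> 2" "c \<in> Sk 1 m' 1" "d \<in> S 1 l'" "\<sigma> = odot c d" by auto
  note u1 = uniq[OF h1]
  note u2 = uniq[OF h2]
  have "m = m'" using u1 u2 by simp
  then show "p = q" using u1 u2 pab qcd by simp
qed

end
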